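(* Let $s\ge 1$, $q\in\{1,\dots,5^s-1\}$, $n\ge 3$ and $i\ge 1$ be integers. Consider the cylindrical Lights Out game on a board with $i$ rows and $n$ columns whose lights have $k=5^s$ states, with every light initially in the same state $k-q$. If $i\equiv 0\pmod{5^s}$ or $i\equiv -1\pmod{5^s}$, then the game is one-pass solvable.
   Context: Cylindrical Lights Out game: a grid of buttons with $i$ rows (numbered $1,\dots,i$ from top to bottom) and $n$ columns, whose left and right sides are identified, so column $1$ and column $n$ are adjacent; rows do not wrap around. Each button has a light whose state is an element of $\mathbb{Z}/k\mathbb{Z}$, state $0$ meaning "off". Pressing a button once adds $1 \pmod k$ to the state of its own light and to the states of the lights orthogonally adjacent to it (above, below, left, right, where they exist, with columns taken cyclically). One-pass chasing: for $r=2,3,\dots,i$ in turn, press each button in row $r$ the number of times in $\{0,\dots,k-1\}$ needed to bring the light directly above it (in row $r-1$) to state $0$. The game is one-pass solvable if after this procedure all lights on the board are in state $0$. *)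

theory Defs
  imports Main
begin

text \<open>Board positions are pairs (row, column) with rows 1..i and columns 1..n;
columns are taken cyclically. Light states are integers kept reduced mod k.\<close>

definition on_board :: "nat \<Rightarrow> nat \<Rightarrow> nat \<times> nat \<Rightarrow> bool" where
  "on_board i n p \<longleftrightarrow> fst p \<in> {1..i} \<and> snd p \<in> {1..n}"

definition adjacent :: "nat \<Rightarrow> nat \<Rightarrow> nat \<times> nat \<Rightarrow> nat \<times> nat \<Rightarrow> bool" where
  "adjacent i n p p' \<longleftrightarrow> on_board i n p \<and> on_board i n p' \<and>
     ((snd p = snd p' \<and> (fst p' = fst p + 1 \<or> fst p = fst p' + 1)) \<or>
      (fst p = fst p' \<and> (int (snd p') - int (snd p)) mod int n \<in> {1, int n - 1}))"

definition press :: "nat \<Rightarrow> nat \<Rightarrow> nat \<Rightarrow> nat \<times> nat \<Rightarrow> int \<Rightarrow> (nat \<times> nat \<Rightarrow> int) \<Rightarrow> (nat \<times> nat \<Rightarrow> int)" where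
  "press k i n b t st = (\<lambda>x. if x = b \<or> adjacent i n b x then (st x + t) mod int k else st x)"

definition chase_row :: "nat \<Rightarrow> nat \<Rightarrow> nat \<Rightarrow> (nat \<times> nat \<Rightarrow> int) \<Rightarrow> nat \<Rightarrow> (nat \<times> nat \<Rightarrow> int)" where
  "chase_row k i n st r =
     fold (\<lambda>c st'. press k i n (r, c) ((- st' (r - 1, c)) mod int k) st') [1..<n+1] st"

definition one_pass :: "nat \<Rightarrow> nat \<Rightarrow> nat \<Rightarrow> (nat \<times> nat \<Rightarrow> int) \<Rightarrow> (nat \<times> nat \<Rightarrow> int)" where
  "one_pass k i n st = fold (\<lambda>r st'. chase_row k i n st' r) [2..<i+1] st"

definition one_pass_solvable :: "nat \<Rightarrow> nat \<Rightarrow> nat \<Rightarrow> (nat \<times> nat \<Rightarrow> int) \<Rightarrow> bool" where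
  "one_pass_solvable k i n st0 \<longleftrightarrow>
     (\<forall>r\<in>{1..i}. \<forall>c\<in>{1..n}. one_pass k i n st0 (r, c) mod int k = 0)"

end

theory Submission
  imports Defs
begin

fun S :: "nat \<Rightarrow> int" where
 "S 0 = 0" | "S (Suc 0) = 0" | "S (Suc (Suc n)) = 1 - 3 * S (Suc n) - S n"

lemma S_add: "S (m + r) = (1 - S (Suc r) - 4 * S r) * S m + (S (Suc r) - S r) * S (Suc m) + S r"
proof (induction m rule: S.induct)
  case 1 show ?case by simp
next
  case 2 show ?case by simp
next
  case (3 m)
  have "S (Suc (Suc m) + r) = 1 - 3 * S (Suc m + r) - S (m + r)" by simp
  then show ?case using 3 by (simp add: algebra_simps)
qed

lemma p1: fixes N m x y u v :: int shows "(1 - N*y - 4*(N*x)) * (m*N*x + N^2*u) + (N*y - N*x)*(m*N*y+N^2*v) + N*x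
  = (m+1)*N*x + N^2*(u - (y+4*x)*(m * x + N * u) + (y - x)*(m * y + N * v))"
  by (simp add: algebra_simps power2_eq_square)
lemma p2: fixes N m x y u v :: int shows "(1 - N*y - 4*(N*x)) * (m*N*y + N^2*v) + (N*y - N*x)*(1 - 3*(m*N*y+N^2*v) - (m*N*x + N^2*u)) + N*x
  = (m+1)*N*y + N^2*(v - (y+4*x)*(m*y+N*v) - (y-x)*(3*m*y + 3*N*v + m*x + N*u))"
  by (simp add: algebra_simps power2_eq_square)

lemma S_mult:
  assumes "S N = int N * x" "S (Suc N) = int N * y"
  shows "\<exists>u v. S (m*N) = int m * int N * x + (int N)^2 * u \<and> S (Suc (m*N)) = int m * int N * y + (int N)^2 * v"
proof (induction m)
  case 0 show ?case by simp
next
  case (Suc m)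
  then obtain u v where u: "S (m*N) = int m * int N * x + (int N)^2 * u"
    and v: "S (Suc (m*N)) = int m * int N * y + (int N)^2 * v" by blast
  have e1: "S (Suc m * N) = (1 - S (Suc N) - 4 * S N) * S (m*N) + (S (Suc N) - S N) * S (Suc (m*N)) + S N"
    using S_add[of "m*N" N] by (simp add: add.commute)
  have e2: "S (Suc (Suc m * N)) = (1 - S (Suc N) - 4 * S N) * S (Suc (m*N)) + (S (Suc N) - S N) * S (Suc (Suc (m*N))) + S N"
    using S_add[of "Suc (m*N)" N] by (simp add: add.commute)
  have e3: "S (Suc (Suc (m*N))) = 1 - 3 * S (Suc (m*N)) - S (m*N)" by simp
  show ?case
  proof (intro exI conjI)
    show "S (Suc m * N) = int (Suc m) * int N * x + (int N)^2 * (u - (y+4*x)*(int m * x + int N * u) + (y - x)*(int m * y + int N * v))"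
      unfolding e1 u v assms using p1[where N="int N" and m="int m" and x=x and y=y and u=u and v=v] by simp
    show "S (Suc (Suc m * N)) = int (Suc m) * int N * y + (int N)^2 * (v - (y+4*x)*(int m*y+int N*v) - (y-x)*(3*int m*y + 3*int N*v + int m*x + int N*u))"
      unfolding e2 e3 u v assms using p2[where N="int N" and m="int m" and x=x and y=y and u=u and v=v] by simp
  qed
qed

lemma S_pow5: "s \<ge> 1 \<Longrightarrow> \<exists>x y. S (5^s) = int (5^s) * x \<and> S (Suc (5^s)) = int (5^s) * y"
proof (induction s rule: dec_induct)
  case base
  have "S 5 = 5 * (-3)" "S 6 = 5 * 8" by (simp_all add: numeral_eq_Suc)
  then show ?case by auto
next
  case (step s)
  then obtain x y where xy: "S (5^s) = int (5^s) * x" "S (Suc (5^s)) = int (5^s) * y" by blast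
  obtain u v where uv: "S (5*5^s) = 5 * int (5^s) * x + (int (5^s))^2 * u"
     "S (Suc (5*5^s)) = 5 * int (5^s) * y + (int (5^s))^2 * v"
    using S_mult[OF xy, of 5] by auto
  obtain s' where "s = Suc s'" using step(1) by (cases s) auto
  then obtain w where w: "(5::nat)^s = 5 * w" by simp
  show ?case
  proof (intro exI conjI)
    show "S (5^Suc s) = int (5^Suc s) * (x + int w * u)" using uv(1) w by (simp add: algebra_simps power2_eq_square)
    show "S (Suc (5^Suc s)) = int (5^Suc s) * (y + int w * v)" using uv(2) w by (simp add: algebra_simps power2_eq_square)
  qed
qed


definition cnt :: "nat \<Rightarrow> nat \<Rightarrow> nat \<Rightarrow> nat \<Rightarrow> nat \<times> nat \<Rightarrow> int" where
  "cnt i n r j x = (\<Sum>c\<in>{1..j}. of_bool (x = (r,c) \<or> adjacent i n (r,c) x))"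

lemma cnt_nonneg: "cnt i n r j x \<ge> 0" by (simp add: cnt_def sum_nonneg)

lemma cnt_Suc: "cnt i n r (Suc j) x = cnt i n r j x + of_bool (x = (r, Suc j) \<or> adjacent i n (r, Suc j) x)"
  by (simp add: cnt_def)

lemma cnt_prev_zero: "r \<ge> 1 \<Longrightarrow> cnt i n r j (r-1, Suc j) = 0"
  unfolding cnt_def adjacent_def by (auto intro!: sum.neutral)

lemma chase_cols:
  assumes "r \<ge> 1" "j \<le> n" "\<forall>c\<in>{1..n}. (- base (r-1,c)) mod int k = T"
  shows "fold (\<lambda>c st'. press k i n (r,c) ((- st' (r-1,c)) mod int k) st') [1..<Suc j] base x
    = (if cnt i n r j x = 0 then base x else (base x + T * cnt i n r j x) mod int k)"
  using assms(2)
proof (induction j arbitrary: x)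
  case 0 show ?case by (simp add: cnt_def)
next
  case (Suc j)
  define g where "g = fold (\<lambda>c st'. press k i n (r,c) ((- st' (r-1,c)) mod int k) st') [1..<Suc j] base"
  have g: "\<And>x. g x = (if cnt i n r j x = 0 then base x else (base x + T * cnt i n r j x) mod int k)"
    using Suc unfolding g_def by auto
  have amt: "(- g (r-1, Suc j)) mod int k = T"
    using g[of "(r-1, Suc j)"] cnt_prev_zero[OF assms(1)] assms(3) Suc.prems by simp
  have l: "[1..<Suc (Suc j)] = [1..<Suc j] @ [Suc j]" by simp
  have f: "fold (\<lambda>c st'. press k i n (r,c) ((- st' (r-1,c)) mod int k) st') [1..<Suc (Suc j)] base
     = press k i n (r, Suc j) T g"
    unfolding l g_def[symmetric] using amt by (simp add: g_def)
  show ?case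
  proof (cases "x = (r, Suc j) \<or> adjacent i n (r, Suc j) x")
    case True
    have c: "cnt i n r (Suc j) x = cnt i n r j x + 1" using True by (simp add: cnt_Suc)
    have lhs: "press k i n (r, Suc j) T g x = (g x + T) mod int k" using True by (simp add: press_def)
    show ?thesis
    proof (cases "cnt i n r j x = 0")
      case True
      then show ?thesis unfolding f lhs c g by simp
    next
      case False
      have "((base x + T * cnt i n r j x) mod int k + T) mod int k = (base x + T * (cnt i n r j x + 1)) mod int k"
        by (simp add: mod_add_left_eq distrib_left add.assoc)
      then show ?thesis unfolding f lhs c g using False cnt_nonneg[of i n r j x] by simp
    qed
  next
    case False
    have c: "cnt i n r (Suc j) x = cnt i n r j x" using False by (simp add: cnt_Suc)
    have lhs: "press k i n (r, Suc j) T g x = g x" using False by (simp add: press_def)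
    show ?thesis unfolding f lhs c g ..
  qed
qed


lemma mod_small: "0 < (n::int) \<Longrightarrow> -n < d \<Longrightarrow> d < n \<Longrightarrow> d mod n = (if d < 0 then d + n else d)"
proof (cases "d < 0")
  case True
  assume "0 < n" "-n < d" "d < n"
  then have "(d + n) mod n = d + n" using True by (intro mod_pos_pos_trivial) auto
  then show ?thesis using True by simp
qed auto

lemma adj_same_row:
  assumes "n \<ge> 3" "c \<in> {1..n}" "c' \<in> {1..n}"
  shows "(c' = c \<or> (int c - int c') mod int n \<in> {1, int n - 1}) \<longleftrightarrow>
    c' \<in> {c, if c = 1 then n else c - 1, if c = n then 1 else c + 1}"
proof -
  have "(int c - int c') mod int n = (if int c - int c' < 0 then int c - int c' + int n else int c - int c')"
    using assms by (intro mod_small) auto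
  then show ?thesis using assms by auto
qed

lemma modh: "((u::int) mod k + ((- (w mod k)) mod k) * m) mod k = (u - w*m) mod k"
proof -
  have "((- (w mod k)) mod k) = (-w) mod k" by (simp add: mod_minus_eq)
  then have "((u::int) mod k + ((- (w mod k)) mod k) * m) mod k = (u mod k + ((-w) mod k) * m) mod k" by simp
  also have "\<dots> = (u + ((-w) mod k) * m) mod k" by (simp add: mod_add_left_eq)
  also have "\<dots> = (u + ((-w) mod k * m) mod k) mod k" by (simp add: mod_add_right_eq)
  also have "\<dots> = (u + ((-w) * m) mod k) mod k" by (simp add: mod_mult_left_eq)
  also have "\<dots> = (u + (-w) * m) mod k" by (simp add: mod_add_right_eq)
  finally show ?thesis by simp
qed

lemma row_cnt:
  assumes "n \<ge> 3" "2 \<le> r" "r \<le> i" "\<rho> \<in> {1..i}" "c \<in> {1..n}"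
  shows "cnt i n r n (\<rho>,c) = (if \<rho> = r then 3 else if Suc \<rho> = r \<or> \<rho> = Suc r then 1 else 0)"
proof -
  consider "\<rho> = r" | "Suc \<rho> = r \<or> \<rho> = Suc r" | "\<rho> \<noteq> r \<and> Suc \<rho> \<noteq> r \<and> \<rho> \<noteq> Suc r" by blast
  then show ?thesis
  proof cases
    case 1
    define F where "F = {c, if c = 1 then n else c - 1, if c = n then 1 else c + 1}"
    have "cnt i n r n (\<rho>,c) = (\<Sum>c'\<in>{1..n}. of_bool (c' \<in> F))"
      unfolding cnt_def
    proof (rule sum.cong)
      fix c' assume c': "c' \<in> {1..n}"
      have ob: "on_board i n (r, c')" "on_board i n (\<rho>, c)" using 1 assms c' by (auto simp: on_board_def)
      have "((\<rho>, c) = (r, c') \<or> adjacent i n (r, c') (\<rho>, c)) \<longleftrightarrow>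
          (c' = c \<or> (int c - int c') mod int n \<in> {1, int n - 1})"
        using 1 ob unfolding adjacent_def by auto
      then show "of_bool ((\<rho>, c) = (r, c') \<or> adjacent i n (r, c') (\<rho>, c)) = (of_bool (c' \<in> F)::int)"
        using adj_same_row[OF assms(1,5) c'] unfolding F_def by simp
    qed simp
    also have "\<dots> = (\<Sum>c'\<in>{1..n} \<inter> F. 1)"
      by (subst sum.inter_restrict) (auto simp: of_bool_def)
    also have "{1..n} \<inter> F = F" using assms unfolding F_def by auto
    also have "(\<Sum>c'\<in>F. (1::int)) = of_nat (card F)" by simp
    also have "card F = 3" using assms unfolding F_def by auto
    finally show ?thesis using 1 by simp
  next
    case 2
    have "cnt i n r n (\<rho>,c) = (\<Sum>c'\<in>{1..n}. if c' = c then 1 else 0)"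
      unfolding cnt_def
    proof (rule sum.cong)
      fix c' assume c': "c' \<in> {1..n}"
      have ob: "on_board i n (r, c')" "on_board i n (\<rho>, c)" using assms c' by (auto simp: on_board_def)
      have "((\<rho>, c) = (r, c') \<or> adjacent i n (r, c') (\<rho>, c)) \<longleftrightarrow> c' = c"
        using 2 ob unfolding adjacent_def by auto
      then show "of_bool ((\<rho>, c) = (r, c') \<or> adjacent i n (r, c') (\<rho>, c)) = (if c' = c then 1 else 0::int)"
        by simp
    qed simp
    then show ?thesis using 2 assms by auto
  next
    case 3
    have "cnt i n r n (\<rho>,c) = 0"
      unfolding cnt_def
    proof (rule sum.neutral, rule ballI)
      fix c' assume c': "c' \<in> {1..n}"
      have "\<not> ((\<rho>, c) = (r, c') \<or> adjacent i n (r, c') (\<rho>, c))"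
        using 3 unfolding adjacent_def by auto
      then show "of_bool ((\<rho>, c) = (r, c') \<or> adjacent i n (r, c') (\<rho>, c)) = (0::int)" by simp
    qed
    then show ?thesis using 3 by auto
  qed
qed


definition tt :: "int \<Rightarrow> nat \<Rightarrow> int" where "tt a r = - a * S r"

definition V :: "nat \<Rightarrow> int \<Rightarrow> nat \<Rightarrow> nat \<Rightarrow> int" where
  "V k a r \<rho> = (if \<rho> < r then 0 else if \<rho> = r then (a + tt a (r-1) + 3 * tt a r) mod int k
     else if \<rho> = Suc r then (a + tt a r) mod int k else a)"

lemma tt_rec: "1 \<le> r \<Longrightarrow> tt a (Suc r) = - (a + tt a (r-1) + 3 * tt a r)"
  by (cases r) (auto simp: tt_def algebra_simps)

lemma invariant:
  assumes "n \<ge> 3" "0 \<le> a" "a < int k" 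
  shows "1 \<le> r \<Longrightarrow> r \<le> i \<Longrightarrow> \<forall>\<rho> c. \<rho> \<in> {1..i} \<longrightarrow> c \<in> {1..n} \<longrightarrow>
     fold (\<lambda>r st'. chase_row k i n st' r) [2..<Suc r] (\<lambda>_. a) (\<rho>,c) = V k a r \<rho>"
proof (induction r)
  case 0 then show ?case by simp
next
  case (Suc r)
  show ?case
  proof (cases "r = 0")
    case True
    have am: "a mod int k = a" using assms by simp
    show ?thesis using True am by (auto simp: V_def tt_def)
  next
    case False
    then have r1: "1 \<le> r" by simp
    define st where "st = fold (\<lambda>r st'. chase_row k i n st' r) [2..<Suc r] (\<lambda>_. a)"
    have IH: "\<And>\<rho> c. \<rho> \<in> {1..i} \<Longrightarrow> c \<in> {1..n} \<Longrightarrow> st (\<rho>,c) = V k a r \<rho>"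
      using Suc r1 unfolding st_def by auto
    define xx where "xx = a + tt a (r-1) + 3 * tt a r"
    define T where "T = (- (xx mod int k)) mod int k"
    have l: "[2..<Suc (Suc r)] = [2..<Suc r] @ [Suc r]" using r1 by simp
    have f: "fold (\<lambda>r st'. chase_row k i n st' r) [2..<Suc (Suc r)] (\<lambda>_. a) = chase_row k i n st (Suc r)"
      unfolding l st_def by simp
    have cond: "\<forall>c\<in>{1..n}. (- st (Suc r - 1, c)) mod int k = T"
      using IH[of r] r1 Suc.prems unfolding T_def xx_def by (auto simp: V_def)
    have cr: "\<And>x. chase_row k i n st (Suc r) x = (if cnt i n (Suc r) n x = 0 then st x else (st x + T * cnt i n (Suc r) n x) mod int k)"
    proof -
      fix x
      have "chase_row k i n st (Suc r) x = fold (\<lambda>c st'. press k i n (Suc r,c) ((- st' (Suc r-1,c)) mod int k) st') [1..<Suc n] st x"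
        by (simp only: chase_row_def Suc_eq_plus1)
      also have "\<dots> = (if cnt i n (Suc r) n x = 0 then st x else (st x + T * cnt i n (Suc r) n x) mod int k)"
        by (rule chase_cols[OF _ le_refl cond]) simp
      finally show "chase_row k i n st (Suc r) x = (if cnt i n (Suc r) n x = 0 then st x else (st x + T * cnt i n (Suc r) n x) mod int k)" .
    qed
    have ttS: "tt a (Suc r) = - xx" unfolding xx_def using tt_rec[OF r1] .
    show ?thesis
    proof (intro allI impI)
      fix \<rho> c assume \<rho>: "\<rho> \<in> {1..i}" and c: "c \<in> {1..n}"
      have cn: "cnt i n (Suc r) n (\<rho>,c) = (if \<rho> = Suc r then 3 else if Suc \<rho> = Suc r \<or> \<rho> = Suc (Suc r) then 1 else 0)"
        using row_cnt[OF assms(1) _ Suc.prems(2) \<rho> c] r1 by simp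
      have st: "st (\<rho>,c) = V k a r \<rho>" using IH \<rho> c by simp
      consider "\<rho> < r" | "\<rho> = r" | "\<rho> = Suc r" | "\<rho> = Suc (Suc r)" | "\<rho> > Suc (Suc r)" by linarith
      then show "fold (\<lambda>r st'. chase_row k i n st' r) [2..<Suc (Suc r)] (\<lambda>_. a) (\<rho>, c) = V k a (Suc r) \<rho>"
      proof cases
        case 1 then show ?thesis unfolding f cr cn st by (simp add: V_def)
      next
        case 2
        have "(xx mod int k + T * 1) mod int k = 0" unfolding T_def using modh[of xx "int k" xx 1] by simp
        then show ?thesis using 2 unfolding f cr cn st by (simp add: V_def xx_def)
      next
        case 3
        have "((a + tt a r) mod int k + T * 3) mod int k = (a + tt a r + 3 * tt a (Suc r)) mod int k"
          unfolding T_def ttS using modh[of "a + tt a r" "int k" xx 3] by (simp add: mult.commute)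
        then show ?thesis using 3 unfolding f cr cn st by (simp add: V_def mult.commute)
      next
        case 4
        have am: "a mod int k = a" using assms by simp
        have "(a + T * 1) mod int k = (a + tt a (Suc r)) mod int k"
          unfolding T_def ttS using modh[of a "int k" xx 1] am by simp
        then show ?thesis using 4 unfolding f cr cn st by (simp add: V_def)
      next
        case 5 then show ?thesis unfolding f cr cn st by (simp add: V_def)
      qed
    qed
  qed
qed

theorem theorem8:
  fixes s q n i :: nat
  assumes "s \<ge> 1" and "1 \<le> q" and "q \<le> 5 ^ s - 1" and "n \<ge> 3" and "i \<ge> 1"
    and "int i mod (5 ^ s) = 0 \<or> (int i + 1) mod (5 ^ s) = 0"
  shows "one_pass_solvable (5 ^ s) i n (\<lambda>_. int (5 ^ s) - int q)"
proof -
  define k where "k = (5::nat)^s"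
  define a where "a = int k - int q"
  have k0: "k > 0" unfolding k_def by simp
  have a0: "0 \<le> a" "a < int k" using assms(2,3) k0 unfolding a_def k_def by auto
  obtain x y where xy: "S k = int k * x" "S (Suc k) = int k * y" using S_pow5[OF assms(1)] unfolding k_def by blast
  have k5: "(5::int)^s = int k" unfolding k_def by simp
  have dvdS: "int k dvd S (Suc i)"
  proof -
    from assms(6) consider "int i mod int k = 0" | "int (Suc i) mod int k = 0" unfolding k5 by (auto simp: add.commute)
    then show ?thesis
    proof cases
      case 1
      then have "k dvd i" by (metis dvd_eq_mod_eq_0 of_nat_dvd_iff)
      then obtain m where m: "i = m * k" by (auto simp: dvd_def mult.commute)
      obtain u v where "S (Suc (m*k)) = int m * int k * y + (int k)^2 * v" using S_mult[OF xy, of m] by blast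
      then show ?thesis unfolding m by (simp add: power2_eq_square)
    next
      case 2
      then have "k dvd Suc i" by (metis dvd_eq_mod_eq_0 of_nat_dvd_iff)
      then obtain m where m: "Suc i = m * k" by (auto simp: dvd_def mult.commute)
      obtain u v where "S (m*k) = int m * int k * x + (int k)^2 * u" using S_mult[OF xy, of m] by blast
      then show ?thesis unfolding m by (simp add: power2_eq_square)
    qed
  qed
  have inv: "\<forall>\<rho> c. \<rho> \<in> {1..i} \<longrightarrow> c \<in> {1..n} \<longrightarrow>
     fold (\<lambda>r st'. chase_row k i n st' r) [2..<Suc i] (\<lambda>_. a) (\<rho>,c) = V k a i \<rho>"
    using invariant[OF assms(4) a0, of i i] assms(5) by simp
  have fin: "V k a i \<rho> mod int k = 0" if "\<rho> \<in> {1..i}" for \<rho>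
  proof (cases "\<rho> < i")
    case True then show ?thesis by (simp add: V_def)
  next
    case False
    then have "\<rho> = i" using that by simp
    moreover have "a + tt a (i-1) + 3 * tt a i = a * S (Suc i)"
      using tt_rec[OF assms(5), of a] by (simp add: tt_def)
    ultimately show ?thesis using dvdS by (simp add: V_def)
  qed
  show ?thesis
    unfolding one_pass_solvable_def one_pass_def k_def[symmetric] a_def[symmetric]
    using inv fin by simp
qed

end
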